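(* Let $R$ be a commutative Noetherian ring with unity and let $y\in R$ be a nonzero zero divisor. If $\deg[y]>\deg[x]$ for every vertex $[x]\neq[y]$ of $\Gamma_E(R)$, then $\operatorname{ann}(y)$ is a maximal element of $\mathfrak F=\{\operatorname{ann}(z)\mid 0\neq z\in R\}$, and hence is an associated prime of $R$.
   Context: For $x,y\in R$ write $x\sim y$ iff $\operatorname{ann}(x)=\operatorname{ann}(y)$; $[x]$ denotes the equivalence class of $x$. Let $Z^*(R)$ be the set of nonzero zero divisors of $R$. The graph $\Gamma_E(R)$ is the simple graph whose vertices are the classes $[x]$ with $x\in Z^*(R)$, two distinct vertices $[x],[y]$ being adjacent iff $xy=0$. The degree of a vertex is the number of vertices adjacent to it. An associated prime of $R$ is a prime ideal of the form $\operatorname{ann}(y)$, $y\in R$. *)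

theory Defs
  imports "HOL-Algebra.Ring_Divisibility" "HOL-Algebra.Ideal"
begin

definition ann :: "('a, 'b) ring_scheme \<Rightarrow> 'a \<Rightarrow> 'a set" where
  "ann R x = {r \<in> carrier R. r \<otimes>\<^bsub>R\<^esub> x = \<zero>\<^bsub>R\<^esub>}"

definition zdiv_star :: "('a, 'b) ring_scheme \<Rightarrow> 'a set" where
  "zdiv_star R = {x \<in> carrier R. x \<noteq> \<zero>\<^bsub>R\<^esub> \<and>
      (\<exists>y \<in> carrier R. y \<noteq> \<zero>\<^bsub>R\<^esub> \<and> x \<otimes>\<^bsub>R\<^esub> y = \<zero>\<^bsub>R\<^esub>)}"

definition eclass :: "('a, 'b) ring_scheme \<Rightarrow> 'a \<Rightarrow> 'a set" where
  "eclass R x = {z \<in> carrier R. ann R z = ann R x}"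

definition GammaE_vertices :: "('a, 'b) ring_scheme \<Rightarrow> 'a set set" where
  "GammaE_vertices R = eclass R ` zdiv_star R"

definition GammaE_adj :: "('a, 'b) ring_scheme \<Rightarrow> 'a set \<Rightarrow> 'a set \<Rightarrow> bool" where
  "GammaE_adj R u v \<longleftrightarrow> u \<in> GammaE_vertices R \<and> v \<in> GammaE_vertices R \<and> u \<noteq> v \<and>
      (\<exists>x \<in> u. \<exists>y \<in> v. x \<otimes>\<^bsub>R\<^esub> y = \<zero>\<^bsub>R\<^esub>)"

definition GammaE_neighbors :: "('a, 'b) ring_scheme \<Rightarrow> 'a set \<Rightarrow> 'a set set" where
  "GammaE_neighbors R v = {u. GammaE_adj R u v}"

text \<open>deg u < deg v, as cardinals (degrees may be infinite).\<close>
definition deg_less :: "('a, 'b) ring_scheme \<Rightarrow> 'a set \<Rightarrow> 'a set \<Rightarrow> bool" where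
  "deg_less R u v \<longleftrightarrow> ordLess2 (card_of (GammaE_neighbors R u)) (card_of (GammaE_neighbors R v))"

definition ann_family :: "('a, 'b) ring_scheme \<Rightarrow> 'a set set" where
  "ann_family R = {ann R z | z. z \<in> carrier R \<and> z \<noteq> \<zero>\<^bsub>R\<^esub>}"

definition maximal_in :: "'c set set \<Rightarrow> 'c set \<Rightarrow> bool" where
  "maximal_in F I \<longleftrightarrow> I \<in> F \<and> (\<forall>J \<in> F. I \<subseteq> J \<longrightarrow> J = I)"

definition associated_prime :: "('a, 'b) ring_scheme \<Rightarrow> 'a set \<Rightarrow> bool" where
  "associated_prime R P \<longleftrightarrow> (\<exists>w \<in> carrier R. P = ann R w) \<and> primeideal P R"

end

theory Submission
  imports Defs
begin

lemma ann_ideal: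
  fixes R (structure)
  assumes "cring R" "y \<in> carrier R"
  shows "ideal (ann R y) R"
proof -
  interpret cring R by fact
  show ?thesis
  proof (rule idealI)
    show "ring R" by unfold_locales
    show "subgroup (ann R y) (add_monoid R)"
    proof (rule subgroup.intro)
      show "ann R y \<subseteq> carrier (add_monoid R)" by (auto simp: ann_def)
      show "\<And>x z. x \<in> ann R y \<Longrightarrow> z \<in> ann R y \<Longrightarrow> x \<otimes>\<^bsub>add_monoid R\<^esub> z \<in> ann R y"
        using assms(2) by (auto simp: ann_def l_distr)
      show "\<one>\<^bsub>add_monoid R\<^esub> \<in> ann R y" using assms(2) by (auto simp: ann_def)
      show "\<And>x. x \<in> ann R y \<Longrightarrow> inv\<^bsub>add_monoid R\<^esub> x \<in> ann R y"
        using assms(2) by (auto simp: ann_def a_inv_def[symmetric] l_minus)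
    qed
    show "\<And>a x. a \<in> ann R y \<Longrightarrow> x \<in> carrier R \<Longrightarrow> x \<otimes> a \<in> ann R y"
      using assms(2) by (auto simp: ann_def m_assoc)
    show "a \<otimes> x \<in> ann R y" if "a \<in> ann R y" "x \<in> carrier R" for a x
    proof -
      have a: "a \<in> carrier R" "a \<otimes> y = \<zero>" using that by (auto simp: ann_def)
      have "a \<otimes> x \<otimes> y = x \<otimes> (a \<otimes> y)" using a(1) that(2) assms(2) by (metis m_assoc m_lcomm)
      also have "\<dots> = \<zero>" using a that by simp
      finally show ?thesis using a that assms(2) by (simp add: ann_def)
    qed
  qed
qed

theorem proposition3p1:
  fixes R (structure) and y
  assumes "cring R" and "noetherian_ring R"
    and "y \<in> zdiv_star R"
    and "\<forall>v \<in> GammaE_vertices R. v \<noteq> eclass R y \<longrightarrow> deg_less R v (eclass R y)"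
  shows "maximal_in (ann_family R) (ann R y) \<and> associated_prime R (ann R y)"
proof -
  interpret cring R by fact
  have y: "y \<in> carrier R" "y \<noteq> \<zero>" using assms(3) by (auto simp: zdiv_star_def)
  obtain w where w: "w \<in> carrier R" "w \<noteq> \<zero>" "y \<otimes> w = \<zero>" using assms(3) by (auto simp: zdiv_star_def)
  have eq_ann: "x \<in> eclass R u \<Longrightarrow> ann R x = ann R u" for x u by (simp add: eclass_def)
  have mem_ann: "a \<in> carrier R \<Longrightarrow> a \<in> ann R x \<longleftrightarrow> a \<otimes> x = \<zero>" for a x by (simp add: ann_def)
  have ecl_eq: "z \<in> carrier R \<Longrightarrow> u \<in> carrier R \<Longrightarrow> eclass R z = eclass R u \<longleftrightarrow> ann R z = ann R u" for z u
    by (auto simp: eclass_def)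
  have adj: "GammaE_adj R (eclass R a) (eclass R b) \<longleftrightarrow> a \<in> zdiv_star R \<and> b \<in> zdiv_star R \<and> ann R a \<noteq> ann R b \<and> a \<otimes> b = \<zero>"
    if "a \<in> zdiv_star R" "b \<in> zdiv_star R" for a b
  proof -
    have ab: "a \<in> carrier R" "b \<in> carrier R" using that by (auto simp: zdiv_star_def)
    have "(\<exists>x \<in> eclass R a. \<exists>y \<in> eclass R b. x \<otimes> y = \<zero>) \<longleftrightarrow> a \<otimes> b = \<zero>"
    proof
      assume "\<exists>x \<in> eclass R a. \<exists>y \<in> eclass R b. x \<otimes> y = \<zero>"
      then obtain x y' where xy: "x \<in> eclass R a" "y' \<in> eclass R b" "x \<otimes> y' = \<zero>" by blast
      have xc: "x \<in> carrier R" "y' \<in> carrier R" using xy by (auto simp: eclass_def)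
      have "x \<in> ann R y'" using xy xc by (simp add: ann_def)
      hence "x \<in> ann R b" using eq_ann[OF xy(2)] by simp
      hence "b \<otimes> x = \<zero>" using xc ab by (simp add: ann_def m_comm)
      hence "b \<in> ann R x" using ab by (simp add: ann_def)
      hence "b \<in> ann R a" using eq_ann[OF xy(1)] by simp
      thus "a \<otimes> b = \<zero>" using ab by (simp add: ann_def m_comm)
    next
      assume "a \<otimes> b = \<zero>"
      moreover have "a \<in> eclass R a" "b \<in> eclass R b" using ab by (auto simp: eclass_def)
      ultimately show "\<exists>x \<in> eclass R a. \<exists>y \<in> eclass R b. x \<otimes> y = \<zero>" by blast
    qed
    thus ?thesis using that ab ecl_eq by (auto simp: GammaE_adj_def GammaE_vertices_def)
  qed
  have maxl: "ann R z = ann R y" if z: "z \<in> carrier R" "z \<noteq> \<zero>" and sub: "ann R y \<subseteq> ann R z" for z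
  proof (rule ccontr)
    assume ne: "ann R z \<noteq> ann R y"
    have "w \<in> ann R y" using w y by (simp add: ann_def m_comm)
    hence "w \<otimes> z = \<zero>" using sub w by (auto simp: ann_def)
    hence zz: "z \<in> zdiv_star R" using z w by (auto simp: zdiv_star_def m_comm)
    have vz: "eclass R z \<in> GammaE_vertices R" using zz by (simp add: GammaE_vertices_def)
    have nez: "eclass R z \<noteq> eclass R y" using ne ecl_eq z y by auto
    have less: "ordLess2 (card_of (GammaE_neighbors R (eclass R z))) (card_of (GammaE_neighbors R (eclass R y)))"
      using assms(4) vz nez by (auto simp: deg_less_def)
    define f where "f v = (if v = eclass R z then eclass R y else v)" for v
    have "inj_on f (GammaE_neighbors R (eclass R y))"
      by (auto simp: inj_on_def f_def GammaE_neighbors_def GammaE_adj_def)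
    moreover have "f ` GammaE_neighbors R (eclass R y) \<subseteq> GammaE_neighbors R (eclass R z)"
    proof
      fix v assume "v \<in> f ` GammaE_neighbors R (eclass R y)"
      then obtain u where u: "GammaE_adj R u (eclass R y)" "v = f u"
        by (auto simp: GammaE_neighbors_def)
      then obtain x where x: "x \<in> zdiv_star R" "u = eclass R x"
        by (auto simp: GammaE_adj_def GammaE_vertices_def)
      have xc: "x \<in> carrier R" using x by (simp add: zdiv_star_def)
      have a1: "ann R x \<noteq> ann R y" "x \<otimes> y = \<zero>" using adj[OF x(1) assms(3)] u x by auto
      show "v \<in> GammaE_neighbors R (eclass R z)"
      proof (cases "u = eclass R z")
        case True
        hence "ann R x = ann R z" using ecl_eq xc z x by auto
        have "z \<otimes> y = \<zero>"
        proof -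
          have "y \<in> ann R x" using a1 xc y by (simp add: ann_def m_comm)
          hence "y \<in> ann R z" using \<open>ann R x = ann R z\<close> by simp
          thus ?thesis using y z by (simp add: ann_def m_comm)
        qed
        hence "y \<otimes> z = \<zero>" using y z by (simp add: m_comm)
        hence "GammaE_adj R (eclass R y) (eclass R z)"
          using adj[OF assms(3) zz] ne assms(3) zz by metis
        thus ?thesis using u True by (simp add: f_def GammaE_neighbors_def)
      next
        case False
        have "x \<in> ann R y" using a1 xc by (simp add: ann_def)
        hence "x \<otimes> z = \<zero>" using sub by (auto simp: ann_def)
        moreover have "ann R x \<noteq> ann R z" using False x ecl_eq xc z by auto
        ultimately have "GammaE_adj R (eclass R x) (eclass R z)"
          using adj[OF x(1) zz] x(1) zz by metis
        thus ?thesis using u x False by (simp add: f_def GammaE_neighbors_def)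
      qed
    qed
    ultimately have "ordLeq2 (card_of (GammaE_neighbors R (eclass R y))) (card_of (GammaE_neighbors R (eclass R z)))"
      using card_of_ordLeq by blast
    thus False using less not_ordLess_ordLeq by blast
  qed
  have max: "maximal_in (ann_family R) (ann R y)"
    unfolding maximal_in_def ann_family_def using y maxl by blast
  have prime: "primeideal (ann R y) R"
  proof (rule primeidealI)
    show "ideal (ann R y) R" by (rule ann_ideal[OF assms(1) y(1)])
    show "cring R" by fact
    show "carrier R \<noteq> ann R y"
    proof
      assume "carrier R = ann R y"
      hence "\<one> \<in> ann R y" using one_closed by metis
      thus False using y by (simp add: ann_def)
    qed
    fix a b assume ab: "a \<in> carrier R" "b \<in> carrier R" "a \<otimes> b \<in> ann R y"
    show "a \<in> ann R y \<or> b \<in> ann R y"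
    proof (rule disjCI)
      assume "b \<notin> ann R y"
      hence bz: "b \<otimes> y \<noteq> \<zero>" using ab by (simp add: ann_def)
      have "ann R y \<subseteq> ann R (b \<otimes> y)"
      proof
        fix x assume "x \<in> ann R y"
        hence x: "x \<in> carrier R" "x \<otimes> y = \<zero>" by (auto simp: ann_def)
        have "x \<otimes> (b \<otimes> y) = b \<otimes> (x \<otimes> y)" using x ab y by (metis m_lcomm)
        also have "\<dots> = \<zero>" using x ab by simp
        finally show "x \<in> ann R (b \<otimes> y)" using x by (simp add: ann_def)
      qed
      hence "ann R (b \<otimes> y) = ann R y" using maxl[of "b \<otimes> y"] bz y ab by auto
      moreover have "a \<in> ann R (b \<otimes> y)" using ab y by (simp add: ann_def m_assoc[symmetric])
      ultimately show "a \<in> ann R y" by simp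
    qed
  qed
  show ?thesis using max prime y unfolding associated_prime_def by blast
qed

end
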